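(* Let $p=\alpha(\alpha+1)>2$, $c_p=\frac{1+z_p}{1-z_p}$, $a_p=h_{c_p}'(z_p)/L_\alpha'(z_p)$, and $$g_p(s)=\begin{cases}a_pL_\alpha(s),& s\in[z_p,1],\\ h_{c_p}(s),& s\in[-1,z_p].\end{cases}$$ Then $g_p$ is $C^1$ on $[-1,1]$, $g_p\ge h_{c_p}$, and for $s\in(-1,1)\setminus\{z_p\}$: $$Dg_p(s):=(1-s^2)g_p''-2sg_p'+pg_p\le0,\qquad \frac{Dg_p(s)}{1-s^2}+Kg_p(s)\le0,$$ where $Kg=p(p-1)g-2(p-1)sg'-(1-s^2)g''$. Consequently, the function $\phi(x,y)=(x+y)^p g_p\big(\frac{y-x}{x+y}\big)$ satisfies $\phi(x,y)\ge y^p-c_p^px^p$ for $x,y\ge0$, $(x,y)\ne(0,0)$, and for all $x,y>0$ with $\frac{y-x}{x+y}\ne z_p$ and all vectors $h,k\in\mathbb R^2$ with $|k|\le|h|$: $$\Big(\frac1x\phi_x+\phi_{xx}\Big)|h|^2+2\phi_{xy}\,(h\cdot k)+\Big(\phi_{yy}+\frac1y\phi_y\Big)|k|^2\le0 .$$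
   Context: $L_\alpha$ is the solution on $(-1,1)$ of $(1-s^2)y''-2sy'+\alpha(\alpha+1)y=0$ bounded near $1$ with $L_\alpha(1)=1$; $z_p$ is its largest zero in $(-1,1)$; $h_c(s)=\big(\frac{1+s}{2}\big)^p-c^p\big(\frac{1-s}{2}\big)^p$. *)

theory Defs
  imports "HOL-Analysis.Analysis"
begin

definition hfun :: "real \<Rightarrow> real \<Rightarrow> real \<Rightarrow> real" where
  "hfun p c s = ((1 + s) / 2) powr p - c powr p * ((1 - s) / 2) powr p"

definition Dop :: "real \<Rightarrow> (real \<Rightarrow> real) \<Rightarrow> real \<Rightarrow> real" where
  "Dop p g s = (1 - s^2) * deriv (deriv g) s - 2 * s * deriv g s + p * g s"

definition Kop :: "real \<Rightarrow> (real \<Rightarrow> real) \<Rightarrow> real \<Rightarrow> real" where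
  "Kop p g s = p * (p - 1) * g s - 2 * (p - 1) * s * deriv g s - (1 - s^2) * deriv (deriv g) s"

text \<open>L is the solution on (-1,1) of (1-s^2)y''-2sy'+alpha(alpha+1)y=0 which is bounded
  near 1 and satisfies L(1)=1 (L(1) understood as the value of its continuous extension).\<close>
definition is_Legendre_L :: "real \<Rightarrow> (real \<Rightarrow> real) \<Rightarrow> bool" where
  "is_Legendre_L \<alpha> L \<longleftrightarrow>
     (\<forall>s\<in>{-1<..<1}. L differentiable (at s) \<and> deriv L differentiable (at s) \<and>
        (1 - s^2) * deriv (deriv L) s - 2 * s * deriv L s + \<alpha> * (\<alpha> + 1) * L s = 0)
     \<and> (\<exists>M. eventually (\<lambda>s. \<bar>L s\<bar> \<le> M) (at_left 1))
     \<and> (L \<longlongrightarrow> 1) (at_left 1) \<and> L 1 = 1"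

definition is_largest_zero :: "(real \<Rightarrow> real) \<Rightarrow> real \<Rightarrow> bool" where
  "is_largest_zero L z \<longleftrightarrow> z \<in> {-1<..<1} \<and> L z = 0 \<and> (\<forall>s\<in>{-1<..<1}. L s = 0 \<longrightarrow> s \<le> z)"

end

theory Submission
  imports Defs "HOL-Real_Asymp.Real_Asymp"
begin


lemma no_log_blowup:
  fixes f f' :: "real \<Rightarrow> real"
  assumes t0: "t0 < 1" and e: "e > 0"
    and d: "\<And>s. t0 < s \<Longrightarrow> s < 1 \<Longrightarrow> (f has_real_derivative f' s) (at s)"
    and b: "\<And>s. t0 < s \<Longrightarrow> s < 1 \<Longrightarrow> f' s \<ge> e / (1 - s)"
    and lim: "(f \<longlongrightarrow> l) (at_left 1)"
  shows False
proof -
  define s0 where "s0 = (t0 + 1) / 2"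
  have s0: "t0 < s0" "s0 < 1" using t0 by (auto simp: s0_def)
  define F where "F s = f s + e * ln (1 - s)" for s
  have mono: "F s0 \<le> F s" if "s0 \<le> s" "s < 1" for s
  proof (rule DERIV_nonneg_imp_nondecreasing[OF that(1)])
    fix x assume x: "s0 \<le> x" "x \<le> s"
    have "(F has_real_derivative (f' x - e / (1 - x))) (at x)"
      unfolding F_def using x s0 that
      by (auto intro!: derivative_eq_intros d simp: field_simps)
    moreover have "f' x - e / (1 - x) \<ge> 0" using b[of x] x s0 that by auto
    ultimately show "\<exists>y. (F has_real_derivative y) (at x) \<and> 0 \<le> y" by blast
  qed
  have ev: "eventually (\<lambda>s. F s0 - e * ln (1 - s) \<le> f s) (at_left 1)"
    using eventually_at_left_real[OF s0(2)]
  proof eventually_elim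
    case (elim s) then show ?case using mono[of s] by (auto simp: F_def)
  qed
  have "filterlim (\<lambda>s. F s0 - e * ln (1 - s)) at_top (at_left 1)"
    using e by real_asymp
  then have "filterlim f at_top (at_left 1)"
    by (rule filterlim_at_top_mono) (use ev in auto)
  then show False
    using not_tendsto_and_filterlim_at_infinity[OF _ lim filterlim_at_top_imp_at_infinity]
      trivial_limit_at_left_real by blast
qed




lemma powr_plus1: fixes U :: real assumes "U > 0" shows "U powr (q + 1) = U powr q * U"
  using assms by (simp add: powr_add)

lemma powr_forms: fixes U p :: real assumes "U > 0"
  shows "U powr (p-1) = U powr (p-2) * U" "U powr p = U powr (p-2) * U * U"
    "U powr (p - 2 - 1) = U powr (p-2) / U" "U powr (p - 1 - 1) = U powr (p-2)"
proof -
  show a: "U powr (p-1) = U powr (p-2) * U" using powr_plus1[OF assms, of "p-2"] by simp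
  show "U powr p = U powr (p-2) * U * U" using powr_plus1[OF assms, of "p-1"] a by simp
  have "U powr (p - 2 - 1 + 1) = U powr (p - 2 - 1) * U" by (rule powr_plus1[OF assms])
  then have "U powr (p - 2) = U powr (p - 2 - 1) * U" by simp
  then show "U powr (p - 2 - 1) = U powr (p-2) / U" using assms by simp
  have "p - 1 - 1 = p - 2" by simp
  then show "U powr (p - 1 - 1) = U powr (p-2)" by (simp only:)
qed

definition sv :: "real \<Rightarrow> real \<Rightarrow> real" where "sv t w = (w - t) / (t + w)"

definition PX :: "real \<Rightarrow> (real \<Rightarrow> real) \<Rightarrow> (real \<Rightarrow> real) \<Rightarrow> real \<Rightarrow> real \<Rightarrow> real" where
  "PX p G G1 t w = p * (t + w) powr (p - 1) * G (sv t w) - 2 * w * (t + w) powr (p - 2) * G1 (sv t w)"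
definition PY :: "real \<Rightarrow> (real \<Rightarrow> real) \<Rightarrow> (real \<Rightarrow> real) \<Rightarrow> real \<Rightarrow> real \<Rightarrow> real" where
  "PY p G G1 t w = p * (t + w) powr (p - 1) * G (sv t w) + 2 * t * (t + w) powr (p - 2) * G1 (sv t w)"

lemma dsv_t: "t + w > 0 \<Longrightarrow> ((\<lambda>t'. sv t' w) has_real_derivative (- 2 * w / (t + w)^2)) (at t)"
  unfolding sv_def by (auto intro!: derivative_eq_intros simp: power2_eq_square divide_simps)
lemma dsv_w: "t + w > 0 \<Longrightarrow> ((\<lambda>w'. sv t w') has_real_derivative (2 * t / (t + w)^2)) (at w)"
  unfolding sv_def by (auto intro!: derivative_eq_intros simp: power2_eq_square divide_simps)
lemma dpow_t: "t + w > 0 \<Longrightarrow> ((\<lambda>t'. (t' + w) powr q) has_real_derivative q * (t + w) powr (q - 1)) (at t)"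
  by (auto intro!: derivative_eq_intros)
lemma dpow_w: "t + w > 0 \<Longrightarrow> ((\<lambda>w'. (t + w') powr q) has_real_derivative q * (t + w) powr (q - 1)) (at w)"
  by (auto intro!: derivative_eq_intros)

lemma D_t:
  fixes Ga Gb :: "real \<Rightarrow> real" and p t w :: real
  assumes U: "t + w > 0" and dG: "(Ga has_real_derivative Gb (sv t w)) (at (sv t w))"
  shows "((\<lambda>t'. (t' + w) powr p * Ga (sv t' w)) has_real_derivative PX p Ga Gb t w) (at t)"
proof -
  note d1 = DERIV_chain2[OF dG dsv_t[OF U]]
  note d2 = dpow_t[OF U, of p]
  have *: "\<And>P g g1 U::real. U > 0 \<Longrightarrow> p * (P * U) * g + g1 * (- 2 * w / U^2) * (P * U * U) = p * (P * U) * g - 2 * w * P * g1"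
    by (simp add: power2_eq_square)
  show ?thesis
    by (rule DERIV_cong[OF DERIV_mult[OF d2 d1]]) (unfold PX_def powr_forms[OF U, of p], rule *[OF U])
qed


lemma D_w:
  fixes Ga Gb :: "real \<Rightarrow> real" and p t w :: real
  assumes U: "t + w > 0" and dG: "(Ga has_real_derivative Gb (sv t w)) (at (sv t w))"
  shows "((\<lambda>w'. (t + w') powr p * Ga (sv t w')) has_real_derivative PY p Ga Gb t w) (at w)"
proof -
  note d1 = DERIV_chain2[OF dG dsv_w[OF U]]
  note d2 = dpow_w[OF U, of p]
  have *: "\<And>P g g1 U::real. U > 0 \<Longrightarrow> p * (P * U) * g + g1 * (2 * t / U^2) * (P * U * U) = p * (P * U) * g + 2 * t * P * g1"
    by (simp add: power2_eq_square)
  show ?thesis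
    by (rule DERIV_cong[OF DERIV_mult[OF d2 d1]]) (unfold PY_def powr_forms[OF U, of p], rule *[OF U])
qed

lemma D_tt:
  fixes Ga Gb Gc :: "real \<Rightarrow> real" and p t w :: real
  assumes U: "t + w > 0" and dG: "(Ga has_real_derivative Gb (sv t w)) (at (sv t w))"
    and dG1: "(Gb has_real_derivative Gc (sv t w)) (at (sv t w))"
  shows "((\<lambda>t'. PX p Ga Gb t' w) has_real_derivative
     (t + w) powr (p - 2) * (p * (p - 1) * Ga (sv t w) - 2 * (p - 1) * (1 + sv t w) * Gb (sv t w)
        + (1 + sv t w)^2 * Gc (sv t w))) (at t)"
proof -
  note d1 = DERIV_chain2[OF dG dsv_t[OF U]]
  note d1' = DERIV_chain2[OF dG1 dsv_t[OF U]]
  define g where "g = Ga (sv t w)"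
  define g1 where "g1 = Gb (sv t w)"
  define g2 where "g2 = Gc (sv t w)"
  define P where "P = (t + w) powr (p - 2)"
  define s where "s = sv t w"
  have s_eq: "s = (w - t) / (t + w)" by (simp add: s_def sv_def)
  define V where "V = t + w"
  have V: "V > 0" using U by (simp add: V_def)
  have tV: "t = V - w" by (simp add: V_def)
  show ?thesis unfolding PX_def
    apply (rule DERIV_cong[OF DERIV_diff[OF DERIV_mult[OF DERIV_cmult[OF dpow_t[OF U]] d1]
          DERIV_mult[OF DERIV_cmult[OF dpow_t[OF U]] d1']]])
    unfolding powr_forms[OF U, of p]
    unfolding g_def[symmetric] g1_def[symmetric] g2_def[symmetric] P_def[symmetric]
    unfolding s_def[symmetric] s_eq V_def[symmetric]
    using V by (simp add: field_simps power2_eq_square) (simp add: V_def algebra_simps)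
qed


lemma D_tw:
  fixes Ga Gb Gc :: "real \<Rightarrow> real" and p t w :: real
  assumes U: "t + w > 0" and dG: "(Ga has_real_derivative Gb (sv t w)) (at (sv t w))"
    and dG1: "(Gb has_real_derivative Gc (sv t w)) (at (sv t w))"
  shows "((\<lambda>w'. PX p Ga Gb t w') has_real_derivative
     (t + w) powr (p - 2) * (p * (p - 1) * Ga (sv t w) - 2 * (p - 1) * sv t w * Gb (sv t w)
        - (1 - (sv t w)^2) * Gc (sv t w))) (at w)"
proof -
  note d1 = DERIV_chain2[OF dG dsv_w[OF U]]
  note d1' = DERIV_chain2[OF dG1 dsv_w[OF U]]
  define g where "g = Ga (sv t w)"
  define g1 where "g1 = Gb (sv t w)"
  define g2 where "g2 = Gc (sv t w)"
  define P where "P = (t + w) powr (p - 2)"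
  define s where "s = sv t w"
  have s_eq: "s = (w - t) / (t + w)" by (simp add: s_def sv_def)
  define V where "V = t + w"
  have V: "V > 0" using U by (simp add: V_def)
  show ?thesis unfolding PX_def
    apply (rule DERIV_cong[OF DERIV_diff[OF DERIV_mult[OF DERIV_cmult[OF dpow_w[OF U]] d1]
          DERIV_mult[OF DERIV_mult[OF DERIV_cmult[OF DERIV_ident] dpow_w[OF U]] d1']]])
    unfolding powr_forms[OF U, of p]
    unfolding g_def[symmetric] g1_def[symmetric] g2_def[symmetric] P_def[symmetric]
    unfolding s_def[symmetric] s_eq V_def[symmetric]
    using V by (simp add: field_simps power2_eq_square) (simp add: V_def algebra_simps)
qed

lemma D_ww:
  fixes Ga Gb Gc :: "real \<Rightarrow> real" and p t w :: real
  assumes U: "t + w > 0" and dG: "(Ga has_real_derivative Gb (sv t w)) (at (sv t w))"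
    and dG1: "(Gb has_real_derivative Gc (sv t w)) (at (sv t w))"
  shows "((\<lambda>w'. PY p Ga Gb t w') has_real_derivative
     (t + w) powr (p - 2) * (p * (p - 1) * Ga (sv t w) + 2 * (p - 1) * (1 - sv t w) * Gb (sv t w)
        + (1 - sv t w)^2 * Gc (sv t w))) (at w)"
proof -
  note d1 = DERIV_chain2[OF dG dsv_w[OF U]]
  note d1' = DERIV_chain2[OF dG1 dsv_w[OF U]]
  define g where "g = Ga (sv t w)"
  define g1 where "g1 = Gb (sv t w)"
  define g2 where "g2 = Gc (sv t w)"
  define P where "P = (t + w) powr (p - 2)"
  define s where "s = sv t w"
  have s_eq: "s = (w - t) / (t + w)" by (simp add: s_def sv_def)
  define V where "V = t + w"
  have V: "V > 0" using U by (simp add: V_def)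
  show ?thesis unfolding PY_def
    apply (rule DERIV_cong[OF DERIV_add[OF DERIV_mult[OF DERIV_cmult[OF dpow_w[OF U]] d1]
          DERIV_mult[OF DERIV_cmult[OF dpow_w[OF U]] d1']]])
    unfolding powr_forms[OF U, of p]
    unfolding g_def[symmetric] g1_def[symmetric] g2_def[symmetric] P_def[symmetric]
    unfolding s_def[symmetric] s_eq V_def[symmetric]
    using V by (simp add: field_simps power2_eq_square) (simp add: V_def algebra_simps)
qed


lemma phi_qf:
  fixes \<phi> :: "real \<Rightarrow> real \<Rightarrow> real" and Ga Gb Gc :: "real \<Rightarrow> real" and I :: "real set" and p x y :: real
    and h k :: "real^2"
  assumes I: "open I" "I \<subseteq> {-1<..<1}" and p: "p > 0"
    and phiG: "\<And>x y. x > 0 \<Longrightarrow> y > 0 \<Longrightarrow> (y - x) / (x + y) \<in> I \<Longrightarrow> \<phi> x y = (x + y) powr p * Ga ((y - x) / (x + y))"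
    and dG: "\<And>s. s \<in> I \<Longrightarrow> (Ga has_real_derivative Gb s) (at s)"
    and dG1: "\<And>s. s \<in> I \<Longrightarrow> (Gb has_real_derivative Gc s) (at s)"
    and G1nn: "\<And>s. s \<in> I \<Longrightarrow> Gb s \<ge> 0"
    and Dn: "\<And>s. s \<in> I \<Longrightarrow> (1 - s^2) * Gc s - 2 * s * Gb s + p * Ga s \<le> 0"
    and Kn: "\<And>s. s \<in> I \<Longrightarrow> p * (p - 1) * Ga s - 2 * (p - 1) * s * Gb s - (1 - s^2) * Gc s \<le> 0"
    and xy: "x > 0" "y > 0" "(y - x) / (x + y) \<in> I" and hk: "norm k \<le> norm h"
  shows "(let \<phi>x = (\<lambda>x' y'. deriv (\<lambda>t. \<phi> t y') x');
               \<phi>y = (\<lambda>x' y'. deriv (\<lambda>t. \<phi> x' t) y');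
               \<phi>xx = deriv (\<lambda>t. \<phi>x t y) x;
               \<phi>yy = deriv (\<lambda>t. \<phi>y x t) y;
               \<phi>xy = deriv (\<lambda>t. \<phi>x x t) y
           in (\<phi>x x y / x + \<phi>xx) * (norm h)^2 + 2 * \<phi>xy * (h \<bullet> k)
              + (\<phi>yy + \<phi>y x y / y) * (norm k)^2 \<le> 0)"
proof -
  define R where "R t w \<longleftrightarrow> t > 0 \<and> w > 0 \<and> sv t w \<in> I" for t w
  have Rxy: "R x y" using xy by (simp add: R_def sv_def)
  have phiR: "\<phi> t w = (t + w) powr p * Ga (sv t w)" if "R t w" for t w
    using phiG[of t w] that by (simp add: R_def sv_def)
  have RU: "t + w > 0" if "R t w" for t w using that by (simp add: R_def)
  have RdG: "(Ga has_real_derivative Gb (sv t w)) (at (sv t w))" if "R t w" for t w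
    using that dG by (simp add: R_def)
  have RdG1: "(Gb has_real_derivative Gc (sv t w)) (at (sv t w))" if "R t w" for t w
    using that dG1 by (simp add: R_def)
  have evt: "eventually (\<lambda>t'. R t' w) (nhds t)" if "R t w" for t w
  proof -
    have c: "isCont (\<lambda>t'. sv t' w) t" using that by (auto simp: R_def sv_def intro!: continuous_intros)
    have "eventually (\<lambda>t'. sv t' w \<in> I) (at t)"
      using topological_tendstoD[OF c[unfolded isCont_def] I(1)] that by (simp add: R_def)
    then have "eventually (\<lambda>t'. sv t' w \<in> I) (nhds t)"
      using that by (simp add: eventually_nhds_conv_at R_def)
    moreover have "eventually (\<lambda>t'. t' > 0) (nhds t)"
      using that by (intro eventually_nhds_in_open[of "{0<..}", simplified]) (auto simp: R_def)
    ultimately show ?thesis by eventually_elim (use that in \<open>auto simp: R_def\<close>)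
  qed
  have evw: "eventually (\<lambda>w'. R t w') (nhds w)" if "R t w" for t w
  proof -
    have c: "isCont (\<lambda>w'. sv t w') w" using that by (auto simp: R_def sv_def intro!: continuous_intros)
    have "eventually (\<lambda>w'. sv t w' \<in> I) (at w)"
      using topological_tendstoD[OF c[unfolded isCont_def] I(1)] that by (simp add: R_def)
    then have "eventually (\<lambda>w'. sv t w' \<in> I) (nhds w)"
      using that by (simp add: eventually_nhds_conv_at R_def)
    moreover have "eventually (\<lambda>w'. w' > 0) (nhds w)"
      using that by (intro eventually_nhds_in_open[of "{0<..}", simplified]) (auto simp: R_def)
    ultimately show ?thesis by eventually_elim (use that in \<open>auto simp: R_def\<close>)
  qed
  have phix: "deriv (\<lambda>t'. \<phi> t' w) t = PX p Ga Gb t w" if "R t w" for t w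
  proof (rule DERIV_imp_deriv)
    have ev: "eventually (\<lambda>t'. (t' + w) powr p * Ga (sv t' w) = \<phi> t' w) (nhds t)"
      using evt[OF that] by eventually_elim (simp add: phiR)
    show "((\<lambda>t'. \<phi> t' w) has_real_derivative PX p Ga Gb t w) (at t)"
      by (rule iffD1[OF DERIV_cong_ev[OF refl ev refl] D_t[where t=t and w=w and Ga=Ga and Gb=Gb and p=p, OF RU[OF that] RdG[OF that]]])
  qed
  have phiy: "deriv (\<lambda>w'. \<phi> t w') w = PY p Ga Gb t w" if "R t w" for t w
  proof (rule DERIV_imp_deriv)
    have ev: "eventually (\<lambda>w'. (t + w') powr p * Ga (sv t w') = \<phi> t w') (nhds w)"
      using evw[OF that] by eventually_elim (simp add: phiR)
    show "((\<lambda>w'. \<phi> t w') has_real_derivative PY p Ga Gb t w) (at w)"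
      by (rule iffD1[OF DERIV_cong_ev[OF refl ev refl] D_w[where t=t and w=w and Ga=Ga and Gb=Gb and p=p, OF RU[OF that] RdG[OF that]]])
  qed
  define s where "s = sv x y"
  define g where "g = Ga s"
  define g1 where "g1 = Gb s"
  define g2 where "g2 = Gc s"
  define P where "P = (x + y) powr (p - 2)"
  have xx: "deriv (\<lambda>t. deriv (\<lambda>t'. \<phi> t' y) t) x = P * (p * (p - 1) * g - 2 * (p - 1) * (1 + s) * g1 + (1 + s)^2 * g2)"
  proof -
    have "eventually (\<lambda>t. PX p Ga Gb t y = deriv (\<lambda>t'. \<phi> t' y) t) (nhds x)"
      using evt[OF Rxy] by eventually_elim (simp add: phix)
    then have "deriv (\<lambda>t. deriv (\<lambda>t'. \<phi> t' y) t) x = deriv (\<lambda>t. PX p Ga Gb t y) x"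
      by (intro deriv_cong_ev[symmetric]) auto
    also have "\<dots> = P * (p * (p - 1) * g - 2 * (p - 1) * (1 + s) * g1 + (1 + s)^2 * g2)"
      unfolding P_def g_def g1_def g2_def s_def
      by (rule DERIV_imp_deriv[OF D_tt[where t=x and w=y and Ga=Ga and Gb=Gb and Gc=Gc and p=p, OF RU[OF Rxy] RdG[OF Rxy] RdG1[OF Rxy]]])
    finally show ?thesis .
  qed
  have yy: "deriv (\<lambda>t. deriv (\<lambda>t'. \<phi> x t') t) y = P * (p * (p - 1) * g + 2 * (p - 1) * (1 - s) * g1 + (1 - s)^2 * g2)"
  proof -
    have "eventually (\<lambda>t. PY p Ga Gb x t = deriv (\<lambda>t'. \<phi> x t') t) (nhds y)"
      using evw[OF Rxy] by eventually_elim (simp add: phiy)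
    then have "deriv (\<lambda>t. deriv (\<lambda>t'. \<phi> x t') t) y = deriv (\<lambda>t. PY p Ga Gb x t) y"
      by (intro deriv_cong_ev[symmetric]) auto
    also have "\<dots> = P * (p * (p - 1) * g + 2 * (p - 1) * (1 - s) * g1 + (1 - s)^2 * g2)"
      unfolding P_def g_def g1_def g2_def s_def
      by (rule DERIV_imp_deriv[OF D_ww[where t=x and w=y and Ga=Ga and Gb=Gb and Gc=Gc and p=p, OF RU[OF Rxy] RdG[OF Rxy] RdG1[OF Rxy]]])
    finally show ?thesis .
  qed
  have xy2: "deriv (\<lambda>t. deriv (\<lambda>t'. \<phi> t' t) x) y = P * (p * (p - 1) * g - 2 * (p - 1) * s * g1 - (1 - s^2) * g2)"
  proof -
    have "eventually (\<lambda>t. PX p Ga Gb x t = deriv (\<lambda>t'. \<phi> t' t) x) (nhds y)"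
      using evw[OF Rxy] by eventually_elim (simp add: phix)
    then have "deriv (\<lambda>t. deriv (\<lambda>t'. \<phi> t' t) x) y = deriv (\<lambda>t. PX p Ga Gb x t) y"
      by (intro deriv_cong_ev[symmetric]) auto
    also have "\<dots> = P * (p * (p - 1) * g - 2 * (p - 1) * s * g1 - (1 - s^2) * g2)"
      unfolding P_def g_def g1_def g2_def s_def
      by (rule DERIV_imp_deriv[OF D_tw[where t=x and w=y and Ga=Ga and Gb=Gb and Gc=Gc and p=p, OF RU[OF Rxy] RdG[OF Rxy] RdG1[OF Rxy]]])
    finally show ?thesis .
  qed
  have x1: "deriv (\<lambda>t'. \<phi> t' y) x = P * (p * (x + y) * g - 2 * y * g1)"
    using phix[OF Rxy] powr_forms[OF RU[OF Rxy], of p]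
    by (simp add: PX_def P_def g_def g1_def s_def algebra_simps)
  have y1: "deriv (\<lambda>t'. \<phi> x t') y = P * (p * (x + y) * g + 2 * x * g1)"
    using phiy[OF Rxy] powr_forms[OF RU[OF Rxy], of p]
    by (simp add: PY_def P_def g_def g1_def s_def algebra_simps)
  define K where "K = p * (p - 1) * g - 2 * (p - 1) * s * g1 - (1 - s^2) * g2"
  define D where "D = (1 - s^2) * g2 - 2 * s * g1 + p * g"
  have sI: "s \<in> I" using Rxy by (simp add: R_def s_def)
  have K: "K \<le> 0" using Kn[OF sI] by (simp add: K_def g_def g1_def g2_def)
  have D: "D \<le> 0" using Dn[OF sI] by (simp add: D_def g_def g1_def g2_def)
  have g1: "g1 \<ge> 0" using G1nn[OF sI] by (simp add: g1_def)
  have P: "P > 0" using xy by (simp add: P_def)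
  have s_eq: "s = (y - x) / (x + y)" by (simp add: s_def sv_def)
  have s1: "1 - s > 0" "1 + s > 0" using I(2) sI by auto
  have A: "deriv (\<lambda>t'. \<phi> t' y) x / x + deriv (\<lambda>t. deriv (\<lambda>t'. \<phi> t' y) t) x
      = P * (K + 2 * D / (1 - s) - 2 * p * g1)"
  proof -
    define V where "V = x + y"
    have V: "V > 0" using xy by (simp add: V_def)
    have xe: "x = V * (1 - s) / 2" and ye: "y = V * (1 + s) / 2"
      using V by (simp_all add: s_eq V_def field_simps)
    have n: "V \<noteq> 0" "1 - s \<noteq> 0" "1 + s \<noteq> 0" using V s1 by auto
    show ?thesis unfolding x1 xx K_def D_def unfolding xe ye
      using n by (simp add: field_simps power2_eq_square)
  qed
  have C: "deriv (\<lambda>t. deriv (\<lambda>t'. \<phi> x t') t) y + deriv (\<lambda>t'. \<phi> x t') y / y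
      = P * (K + 2 * D / (1 + s) + 2 * p * g1)"
  proof -
    define V where "V = x + y"
    have V: "V > 0" using xy by (simp add: V_def)
    have xe: "x = V * (1 - s) / 2" and ye: "y = V * (1 + s) / 2"
      using V by (simp_all add: s_eq V_def field_simps)
    have n4: "V * 2 + V * (s * 2) \<noteq> 0"
    proof -
      have "V * 2 + V * (s * 2) = 2 * (V * (1 + s))" by (simp add: algebra_simps)
      moreover have "V * (1 + s) > 0" using V s1 by simp
      ultimately show ?thesis by linarith
    qed
    have n: "V \<noteq> 0" "1 - s \<noteq> 0" "1 + s \<noteq> 0" "V * 2 + V * (s * 2) \<noteq> 0"
      using V s1 n4 by auto
    show ?thesis unfolding y1 yy K_def D_def unfolding xe ye
      using n by (simp add: field_simps power2_eq_square)
  qed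
  have B: "deriv (\<lambda>t. deriv (\<lambda>t'. \<phi> t' t) x) y = P * K" unfolding xy2 K_def ..
  define nh where "nh = (norm h)^2"
  define nk where "nk = (norm k)^2"
  define hk where "hk = h \<bullet> k"
  have sq: "nh + 2 * hk + nk \<ge> 0"
  proof -
    have "(norm (h + k))^2 = nh + 2 * hk + nk"
      by (simp add: nh_def nk_def hk_def power2_norm_eq_inner inner_add inner_commute algebra_simps)
    then show ?thesis by (metis zero_le_power2)
  qed
  have nkh: "nk \<le> nh" unfolding nk_def nh_def using hk by (simp add: power_mono)
  have nh0: "nh \<ge> 0" "nk \<ge> 0" by (simp_all add: nh_def nk_def)
  have main: "P * (K + 2 * D / (1 - s) - 2 * p * g1) * nh + 2 * (P * K) * hk + P * (K + 2 * D / (1 + s) + 2 * p * g1) * nk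
     = P * (K * (nh + 2 * hk + nk) + (2 * D / (1 - s)) * nh + (2 * D / (1 + s)) * nk + 2 * p * g1 * (nk - nh))"
    by (simp add: algebra_simps)
  have t1: "K * (nh + 2 * hk + nk) \<le> 0" using K sq by (simp add: mult_nonpos_nonneg)
  have t2: "(2 * D / (1 - s)) * nh \<le> 0" using D s1 nh0 by (simp add: mult_nonpos_nonneg divide_nonpos_pos)
  have t3: "(2 * D / (1 + s)) * nk \<le> 0" using D s1 nh0 by (simp add: mult_nonpos_nonneg divide_nonpos_pos)
  have t4: "2 * p * g1 * (nk - nh) \<le> 0" using p g1 nkh by (simp add: mult_nonneg_nonpos)
  have "P * (K * (nh + 2 * hk + nk) + (2 * D / (1 - s)) * nh + (2 * D / (1 + s)) * nk + 2 * p * g1 * (nk - nh)) \<le> 0"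
  proof -
    have "K * (nh + 2 * hk + nk) + (2 * D / (1 - s)) * nh + (2 * D / (1 + s)) * nk + 2 * p * g1 * (nk - nh) \<le> 0"
      using t1 t2 t3 t4 by linarith
    then show ?thesis using P by (intro mult_nonneg_nonpos) auto
  qed
  then show ?thesis
    unfolding Let_def A[symmetric] C[symmetric] B[symmetric] nh_def[symmetric] nk_def[symmetric] hk_def[symmetric]
    using main by (simp add: A C B)
qed




locale leg =
  fixes p z c a :: real and L :: "real \<Rightarrow> real"
  assumes p_gt: "p > 2"
    and dL: "\<And>s. -1 < s \<Longrightarrow> s < 1 \<Longrightarrow> (L has_real_derivative deriv L s) (at s)"
    and ddL: "\<And>s. -1 < s \<Longrightarrow> s < 1 \<Longrightarrow> (deriv L has_real_derivative deriv (deriv L) s) (at s)"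
    and ode: "\<And>s. -1 < s \<Longrightarrow> s < 1 \<Longrightarrow>
       (1 - s^2) * deriv (deriv L) s - 2 * s * deriv L s + p * L s = 0"
    and lim1: "(L \<longlongrightarrow> 1) (at_left 1)" and L1: "L 1 = 1"
    and zlo: "-1 < z" and zhi: "z < 1" and Lz: "L z = 0"
    and zmax: "\<And>s. -1 < s \<Longrightarrow> s < 1 \<Longrightarrow> L s = 0 \<Longrightarrow> s \<le> z"
    and c_def: "c = (1 + z) / (1 - z)"
    and a_def: "a = deriv (hfun p c) z / deriv L z"
begin

lemma sq_pos: "-1 < s \<Longrightarrow> s < (1::real) \<Longrightarrow> 1 - s^2 > 0"
  by (simp add: abs_square_less_1 abs_less_iff)

definition Q where "Q s = (1 - s^2) * deriv L s"

lemma Q_deriv: "-1 < s \<Longrightarrow> s < 1 \<Longrightarrow> (Q has_real_derivative (- p * L s)) (at s)"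
proof -
  assume s: "-1 < s" "s < 1"
  have "(Q has_real_derivative ((- (2 * s)) * deriv L s + (1 - s^2) * deriv (deriv L) s)) (at s)"
    unfolding Q_def[abs_def]
    by (rule derivative_eq_intros refl ddL s)+ simp
  moreover have "(- (2 * s)) * deriv L s + (1 - s^2) * deriv (deriv L) s = - p * L s"
    using ode[OF s] by (simp add: algebra_simps)
  ultimately show ?thesis by simp
qed

lemma L_cont: "-1 < s \<Longrightarrow> s < 1 \<Longrightarrow> isCont L s"
  using dL DERIV_isCont by blast

lemma Q_cont: "-1 < s \<Longrightarrow> s < 1 \<Longrightarrow> isCont Q s"
  using Q_deriv DERIV_isCont by blast

lemma L_pos: assumes s: "z < s" "s < 1" shows "L s > 0"
proof (rule ccontr)
  assume neg: "\<not> L s > 0"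
  have "eventually (\<lambda>x. L x > 1/2) (at_left 1)"
    using order_tendstoD(1)[OF lim1, of "1/2"] by simp
  moreover have "eventually (\<lambda>x. x \<in> {s<..<1}) (at_left 1)"
    using eventually_at_left_real[OF s(2)] .
  ultimately have "eventually (\<lambda>x. L x > 1/2 \<and> x \<in> {s<..<1}) (at_left 1)"
    by eventually_elim auto
  note ev = eventually_happens[OF this]
  then obtain t where t: "L t > 1/2" "s < t" "t < 1"
    by auto
  have "\<exists>x\<ge>s. x \<le> t \<and> L x = 0"
    by (rule IVT) (use neg t s zlo in \<open>auto intro!: L_cont\<close>)
  then obtain x where "s \<le> x" "x \<le> t" "L x = 0" by blast
  with zmax[of x] s t zlo show False by auto
qed

lemma Q_nonneg: assumes t: "z < t" "t < 1" shows "Q t \<ge> 0"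
proof (rule ccontr)
  assume "\<not> Q t \<ge> 0"
  then have qt: "Q t < 0" by simp
  have Qle: "Q s \<le> Q t" if "t \<le> s" "s < 1" for s
  proof -
    have "Q s \<le> Q t"
    proof (rule DERIV_nonpos_imp_nonincreasing[OF that(1)])
      fix x assume "t \<le> x" "x \<le> s"
      then show "\<exists>y. (Q has_real_derivative y) (at x) \<and> y \<le> 0"
        using Q_deriv[of x] L_pos[of x] t that zlo p_gt
        by (intro exI[of _ "- p * L x"]) (auto simp: mult_nonneg_nonneg)
    qed
    then show ?thesis .
  qed
  show False
  proof (rule no_log_blowup[of t "- Q t / 2" "\<lambda>x. - L x" "\<lambda>x. - deriv L x"])
    show "t < 1" "0 < - Q t / 2" using t qt by auto
    show "((\<lambda>x. - L x) \<longlongrightarrow> - 1) (at_left 1)" using lim1 by (intro tendsto_intros)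
    fix s assume s: "t < s" "s < 1"
    show "((\<lambda>x. - L x) has_real_derivative - deriv L s) (at s)"
      using s t zlo by (auto intro!: derivative_eq_intros dL)
    have pos: "1 - s^2 > 0" "1 - s > 0" using s t zlo sq_pos[of s] by auto
    have "- deriv L s = - Q s / (1 - s^2)" using pos by (simp add: Q_def)
    also have "\<dots> \<ge> - Q t / (1 - s^2)"
      using Qle[of s] s pos by (intro divide_right_mono) auto
    also have "- Q t / (1 - s^2) \<ge> - Q t / 2 / (1 - s)"
    proof -
      have "0 \<le> (1 - s)^2" by simp
      then have "1 - s^2 \<le> 2 * (1 - s)" by (simp add: power2_eq_square algebra_simps)
      then have "- Q t / (2 * (1 - s)) \<le> - Q t / (1 - s^2)"
        using qt pos by (intro divide_left_mono) auto
      then show ?thesis by simp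
    qed
    finally show "- Q t / 2 / (1 - s) \<le> - deriv L s" .
  qed
qed

end


context leg begin

lemma Q_pos: assumes t: "z \<le> t" "t < 1" shows "Q t > 0"
proof -
  define t' where "t' = (t + 1) / 2"
  have t': "t < t'" "t' < 1" "z < t'" using t by (auto simp: t'_def)
  have "Q t' < Q t"
  proof (rule DERIV_neg_imp_decreasing_open[OF t'(1)])
    fix x assume x: "t < x" "x < t'"
    show "\<exists>y. (Q has_real_derivative y) (at x) \<and> y < 0"
      using Q_deriv[of x] L_pos[of x] x t t' zlo p_gt
      by (intro exI[of _ "- p * L x"]) auto
  next
    show "continuous_on {t..t'} Q"
      using t t' zlo by (intro continuous_at_imp_continuous_on ballI Q_cont) auto
  qed
  with Q_nonneg[OF t'(3,2)] show ?thesis by simp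
qed

lemma Lp_pos: assumes t: "z \<le> t" "t < 1" shows "deriv L t > 0"
proof -
  have "1 - t^2 > 0" using t zlo sq_pos by auto
  with Q_pos[OF t] show ?thesis by (simp add: Q_def zero_less_mult_iff)
qed

lemma Q_decr: assumes "z \<le> s" "s \<le> t" "t < 1" shows "Q t \<le> Q s"
proof (rule DERIV_nonpos_imp_nonincreasing[OF assms(2)])
  fix x assume "s \<le> x" "x \<le> t"
  then show "\<exists>y. (Q has_real_derivative y) (at x) \<and> y \<le> 0"
    using Q_deriv[of x] L_pos[of x] assms zlo p_gt Lz
    by (intro exI[of _ "- p * L x"]) (cases "x = z"; auto)
qed

lemma Q_lim: "(Q \<longlongrightarrow> 0) (at_left 1)"
proof (rule order_tendstoI)
  fix e :: real assume "e < 0"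
  show "eventually (\<lambda>x. e < Q x) (at_left 1)"
    using eventually_at_left_real[OF zhi]
    by eventually_elim (use Q_nonneg \<open>e < 0\<close> in force)
next
  fix e :: real assume e: "0 < e"
  have "\<exists>s1. z < s1 \<and> s1 < 1 \<and> Q s1 < e"
  proof (rule ccontr)
    assume "\<not> ?thesis"
    then have ge: "Q s \<ge> e" if "z < s" "s < 1" for s using that by force
    show False
    proof (rule no_log_blowup[OF zhi _ _ _ lim1, of "e/2" "deriv L"])
      show "e/2 > 0" using e by simp
      fix s assume s: "z < s" "s < 1"
      show "(L has_real_derivative deriv L s) (at s)" using s zlo by (intro dL) auto
      have pos: "1 - s^2 > 0" "1 - s > 0" using s zlo sq_pos[of s] by auto
      have "deriv L s = Q s / (1 - s^2)" using pos by (simp add: Q_def)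
      also have "\<dots> \<ge> e / (1 - s^2)"
        using ge[OF s] pos by (intro divide_right_mono) auto
      also have "e / (1 - s^2) \<ge> e / 2 / (1 - s)"
      proof -
        have "0 \<le> (1 - s)^2" by simp
        then have "1 - s^2 \<le> 2 * (1 - s)" by (simp add: power2_eq_square algebra_simps)
        then have "e / (2 * (1 - s)) \<le> e / (1 - s^2)"
          using e pos by (intro divide_left_mono) auto
        then show ?thesis by simp
      qed
      finally show "e / 2 / (1 - s) \<le> deriv L s" .
    qed
  qed
  then obtain s1 where s1: "z < s1" "s1 < 1" "Q s1 < e" by blast
  show "eventually (\<lambda>x. Q x < e) (at_left 1)"
    using eventually_at_left_real[OF s1(2)]
  proof eventually_elim
    case (elim x)
    then have "Q x \<le> Q s1" using s1 by (intro Q_decr) auto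
    then show ?case using s1 by simp
  qed
qed

lemma Lp_lim: "(deriv L \<longlongrightarrow> p / 2) (at_left 1)"
proof -
  have ev01: "eventually (\<lambda>x. x \<in> {0<..<1}) (at_left (1::real))"
    by (rule eventually_at_left_real) simp
  have "((\<lambda>x. Q x / (1 - x)) \<longlongrightarrow> p) (at_left 1)"
  proof (rule lhopital_left[where f' = "\<lambda>x. - p * L x" and g' = "\<lambda>x. -1"])
    show "(Q \<longlongrightarrow> 0) (at_left 1)" by (rule Q_lim)
    show "((\<lambda>x. 1 - x) \<longlongrightarrow> 0) (at_left (1::real))"
      using tendsto_diff[OF tendsto_const[of 1] tendsto_ident_at[of 1 "{..<1}"]] by simp
    show "eventually (\<lambda>x. 1 - x \<noteq> 0) (at_left (1::real))"
      using ev01 by eventually_elim auto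
    show "eventually (\<lambda>x. - 1 \<noteq> (0::real)) (at_left (1::real))" by simp
    show "eventually (\<lambda>x. (Q has_real_derivative (- p * L x)) (at x)) (at_left 1)"
      using ev01 by eventually_elim (use Q_deriv in auto)
    show "eventually (\<lambda>x. ((\<lambda>x. 1 - x) has_real_derivative (-1)) (at x)) (at_left (1::real))"
      by (intro always_eventually allI) (auto intro!: derivative_eq_intros)
    show "filterlim (\<lambda>x. - p * L x / - 1) (nhds p) (at_left 1)"
      using tendsto_mult[OF tendsto_const[of p] lim1] by simp
  qed
  then have "((\<lambda>x. Q x / (1 - x) / (1 + x)) \<longlongrightarrow> p / (1 + 1)) (at_left 1)"
    by (intro tendsto_intros) (auto intro!: tendsto_mono[OF at_le] tendsto_ident_at)
  then have "((\<lambda>x. Q x / (1 - x) / (1 + x)) \<longlongrightarrow> p / 2) (at_left 1)" by simp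
  then show ?thesis
  proof (rule Lim_transform_eventually)
    show "eventually (\<lambda>x. Q x / (1 - x) / (1 + x) = deriv L x) (at_left 1)"
      using ev01
    proof eventually_elim
      case (elim x)
      then have "1 - x^2 > 0" "1 - x > 0" "1 + x > 0" using sq_pos[of x] by auto
      then have "Q x / (1 - x) / (1 + x) = Q x / (1 - x^2)"
        by (simp add: power2_eq_square field_simps)
      also have "\<dots> = deriv L x" using \<open>1 - x^2 > 0\<close> by (simp add: Q_def)
      finally show ?case .
    qed
  qed
qed

lemma L_deriv_1: "(L has_real_derivative p / 2) (at 1 within {-1..1})"
proof -
  have ev01: "eventually (\<lambda>x. x \<in> {0<..<1}) (at_left (1::real))"
    by (rule eventually_at_left_real) simp
  have "((\<lambda>x. (L x - 1) / (x - 1)) \<longlongrightarrow> p / 2) (at_left 1)"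
  proof (rule lhopital_left[where f' = "deriv L" and g' = "\<lambda>x. 1"])
    show "((\<lambda>x. L x - 1) \<longlongrightarrow> 0) (at_left 1)"
      using tendsto_diff[OF lim1 tendsto_const[of 1]] by simp
    show "((\<lambda>x. x - 1) \<longlongrightarrow> 0) (at_left (1::real))"
      using tendsto_diff[OF tendsto_ident_at[of 1 "{..<1}"] tendsto_const[of 1]] by simp
    show "eventually (\<lambda>x. x - 1 \<noteq> 0) (at_left (1::real))"
      using ev01 by eventually_elim auto
    show "eventually (\<lambda>x. 1 \<noteq> (0::real)) (at_left (1::real))" by simp
    show "eventually (\<lambda>x. ((\<lambda>x. L x - 1) has_real_derivative deriv L x) (at x)) (at_left 1)"
      using ev01 by eventually_elim (auto intro!: derivative_eq_intros dL)
    show "eventually (\<lambda>x. ((\<lambda>x. x - 1) has_real_derivative 1) (at x)) (at_left (1::real))"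
      by (intro always_eventually allI) (auto intro!: derivative_eq_intros)
    show "filterlim (\<lambda>x. deriv L x / 1) (nhds (p/2)) (at_left 1)"
      using Lp_lim by simp
  qed
  then show ?thesis
    by (simp add: has_field_derivative_iff at_within_Icc_at_left L1)
qed

end



lemma powr_p12: fixes U :: real assumes "U > 0"
  shows "U powr (p-1) = U powr (p-2) * U" "U powr p = U powr (p-2) * U * U"
proof -
  show a: "U powr (p-1) = U powr (p-2) * U" using powr_plus1[OF assms, of "p-2"] by simp
  show "U powr p = U powr (p-2) * U * U" using powr_plus1[OF assms, of "p-1"] a by simp
qed

context leg begin

definition hd where "hd s = p/2 * ((1+s)/2) powr (p-1) + c powr p * (p/2) * ((1-s)/2) powr (p-1)"
definition hdd where "hdd s = p*(p-1)/4 * ((1+s)/2) powr (p-2) - c powr p * (p*(p-1)/4) * ((1-s)/2) powr (p-2)"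
definition ph where "ph s = ((1+s)/2) powr (p-2) - c powr p * ((1-s)/2) powr (p-2)"

lemma c_pos: "c > 0" using zlo zhi by (simp add: c_def)

lemma hfun_eq: "hfun p c = (\<lambda>s. ((1 + s) / 2) powr p - c powr p * ((1 - s) / 2) powr p)"
  by (simp add: hfun_def[abs_def])

lemma h_deriv: assumes s: "-1 < s" "s < 1" shows "(hfun p c has_real_derivative hd s) (at s)"
  unfolding hfun_eq hd_def using s
  by (auto intro!: derivative_eq_intros simp: field_simps)

lemma hd_deriv: assumes s: "-1 < s" "s < 1" shows "(hd has_real_derivative hdd s) (at s)"
  unfolding hd_def[abs_def] hdd_def using s
  by (auto intro!: derivative_eq_intros simp: field_simps)

lemma hd_pos: assumes s: "-1 < s" "s < 1" shows "hd s > 0"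
  unfolding hd_def using s p_gt c_pos by (intro add_pos_pos mult_pos_pos) auto

lemma hz: "hfun p c z = 0"
proof -
  have "c * ((1 - z) / 2) = (1 + z) / 2" using zhi by (simp add: c_def field_simps)
  then have "c powr p * ((1 - z) / 2) powr p = ((1 + z) / 2) powr p"
    using c_pos zhi by (metis powr_mult less_eq_real_def divide_nonneg_pos diff_gt_0_iff_gt zero_less_numeral)
  then show ?thesis by (simp add: hfun_def)
qed

lemma Dh: assumes s: "-1 < s" "s < 1"
  shows "(1 - s^2) * hdd s - 2 * s * hd s + p * hfun p c s = p^2 * ((1+s)/2) * ((1-s)/2) * ph s"
proof -
  define U where "U = (1+s)/2"
  define V where "V = (1-s)/2"
  have U: "U > 0" and V: "V > 0" using s by (auto simp: U_def V_def)
  have sUV: "s = U - V" "1 - s^2 = 4 * U * V" by (auto simp: U_def V_def power2_eq_square field_simps)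
  have hs: "hfun p c s = U powr (p-2) * U * U - c powr p * (V powr (p-2) * V * V)"
    unfolding hfun_def U_def[symmetric] V_def[symmetric] using powr_p12[OF U, of p] powr_p12[OF V, of p] by simp
  have hds: "hd s = p/2 * (U powr (p-2) * U) + c powr p * (p/2) * (V powr (p-2) * V)"
    unfolding hd_def U_def[symmetric] V_def[symmetric] using powr_p12[OF U, of p] powr_p12[OF V, of p] by simp
  have hdds: "hdd s = p*(p-1)/4 * U powr (p-2) - c powr p * (p*(p-1)/4) * V powr (p-2)"
    unfolding hdd_def U_def[symmetric] V_def[symmetric] by simp
  have phs: "ph s = U powr (p-2) - c powr p * V powr (p-2)" unfolding ph_def U_def[symmetric] V_def[symmetric] by simp
  show ?thesis unfolding hs hds hdds phs U_def[symmetric] V_def[symmetric] unfolding sUV(2) unfolding sUV(1)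
    by (simp add: power2_eq_square field_simps)
qed

lemma Kh: assumes s: "-1 < s" "s < 1"
  shows "p * (p - 1) * hfun p c s - 2 * (p - 1) * s * hd s - (1 - s^2) * hdd s = 0"
proof -
  define U where "U = (1+s)/2"
  define V where "V = (1-s)/2"
  have U: "U > 0" and V: "V > 0" using s by (auto simp: U_def V_def)
  have sUV: "s = U - V" "1 - s^2 = 4 * U * V" by (auto simp: U_def V_def power2_eq_square field_simps)
  have hs: "hfun p c s = U powr (p-2) * U * U - c powr p * (V powr (p-2) * V * V)"
    unfolding hfun_def U_def[symmetric] V_def[symmetric] using powr_p12[OF U, of p] powr_p12[OF V, of p] by simp
  have hds: "hd s = p/2 * (U powr (p-2) * U) + c powr p * (p/2) * (V powr (p-2) * V)"
    unfolding hd_def U_def[symmetric] V_def[symmetric] using powr_p12[OF U, of p] powr_p12[OF V, of p] by simp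
  have hdds: "hdd s = p*(p-1)/4 * U powr (p-2) - c powr p * (p*(p-1)/4) * V powr (p-2)"
    unfolding hdd_def U_def[symmetric] V_def[symmetric] by simp
  show ?thesis unfolding hs hds hdds unfolding sUV(2) unfolding sUV(1)
    by (simp add: power2_eq_square field_simps)
qed

end


context leg begin

lemma deriv_h_z: "deriv (hfun p c) z = hd z"
  using h_deriv[OF zlo zhi] by (rule DERIV_imp_deriv)

lemma a_eq: "a = hd z / deriv L z" by (simp add: a_def deriv_h_z)

lemma a_pos: "a > 0"
  using hd_pos[OF zlo zhi] Lp_pos[of z] zhi by (simp add: a_eq)

definition W where "W s = (1 - s^2) * L s * hd s - Q s * hfun p c s"

lemma W_deriv: assumes s: "-1 < s" "s < 1"
  shows "(W has_real_derivative L s * (p^2 * ((1+s)/2) * ((1-s)/2) * ph s)) (at s)"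
proof -
  have D1: "(W has_real_derivative
     ((- (2 * s)) * L s * hd s + (1 - s^2) * deriv L s * hd s + (1 - s^2) * L s * hdd s
       - ((- p * L s) * hfun p c s + Q s * hd s))) (at s)"
    unfolding W_def[abs_def] using s
    by (auto intro!: derivative_eq_intros dL hd_deriv Q_deriv h_deriv simp: algebra_simps)
  have E: "(- (2 * s)) * L s * hd s + (1 - s^2) * deriv L s * hd s + (1 - s^2) * L s * hdd s
       - ((- p * L s) * hfun p c s + Q s * hd s)
     = L s * ((1 - s^2) * hdd s - 2 * s * hd s + p * hfun p c s)"
    by (simp add: Q_def algebra_simps)
  from D1 have "(W has_real_derivative L s * ((1 - s^2) * hdd s - 2 * s * hd s + p * hfun p c s)) (at s)"
    by (simp only: E)
  then show ?thesis by (simp only: Dh[OF s])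
qed

lemma W_z: "W z = 0" by (simp add: W_def Lz hz)

lemma hd_lim1: "(hd \<longlongrightarrow> hd 1) (at_left 1)"
  unfolding hd_def using p_gt
  by (intro tendsto_intros tendsto_powr') (auto intro!: tendsto_intros tendsto_ident_at eventually_at_leftI[of 0])

lemma h_lim1: "(hfun p c \<longlongrightarrow> 1) (at_left 1)"
proof -
  have "(hfun p c \<longlongrightarrow> hfun p c 1) (at_left 1)"
    unfolding hfun_eq using p_gt
    by (intro tendsto_intros tendsto_powr') (auto intro!: tendsto_intros tendsto_ident_at eventually_at_leftI[of 0])
  then show ?thesis by (simp add: hfun_def)
qed

lemma W_lim: "(W \<longlongrightarrow> 0) (at_left 1)"
proof -
  have "(W \<longlongrightarrow> (1 - 1^2) * 1 * hd 1 - 0 * 1) (at_left 1)"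
    unfolding W_def[abs_def]
    by (intro tendsto_intros lim1 hd_lim1 Q_lim h_lim1)
  then show ?thesis by simp
qed

lemma ph_mono: assumes "-1 < s" "s < t" "t < 1" shows "ph s < ph t"
proof -
  have "((1+s)/2) powr (p-2) < ((1+t)/2) powr (p-2)"
    using assms p_gt by (intro powr_less_mono2) auto
  moreover have "((1-t)/2) powr (p-2) < ((1-s)/2) powr (p-2)"
    using assms p_gt by (intro powr_less_mono2) auto
  moreover have "c powr p > 0" using c_pos by simp
  ultimately show ?thesis unfolding ph_def
    by (smt (verit) mult_strict_left_mono)
qed

lemma W_cont: "-1 < s \<Longrightarrow> s < 1 \<Longrightarrow> isCont W s"
  using W_deriv DERIV_isCont by blast

lemma Wd_sign_pos: "z < x \<Longrightarrow> x < 1 \<Longrightarrow> ph x > 0 \<Longrightarrow> L x * (p^2 * ((1+x)/2) * ((1-x)/2) * ph x) > 0"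
  using L_pos[of x] zlo p_gt by (intro mult_pos_pos) auto

lemma Wd_sign_nonpos: "z \<le> x \<Longrightarrow> x < 1 \<Longrightarrow> ph x \<le> 0 \<Longrightarrow> L x * (p^2 * ((1+x)/2) * ((1-x)/2) * ph x) \<le> 0"
  using L_pos[of x] zlo p_gt Lz
  by (cases "x = z") (auto intro!: mult_nonneg_nonpos)

lemma W_le_lim: assumes s: "z < s" "s < 1" and ph: "ph s > 0" shows "W s \<le> 0"
proof -
  have Wle: "W s \<le> W t" if t: "s \<le> t" "t < 1" for t
  proof (rule DERIV_nonneg_imp_nondecreasing[OF t(1)])
    fix x assume x: "s \<le> x" "x \<le> t"
    have "ph x > 0" using ph ph_mono[of s x] x s t zlo by (cases "s = x") auto
    then show "\<exists>y. (W has_real_derivative y) (at x) \<and> 0 \<le> y"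
      using W_deriv[of x] Wd_sign_pos[of x] x s t zlo
      by (intro exI[of _ "L x * (p^2 * ((1+x)/2) * ((1-x)/2) * ph x)"]) (auto simp: less_imp_le)
  qed
  have "eventually (\<lambda>t. W s \<le> W t) (at_left 1)"
    using eventually_at_left_real[OF s(2)] by eventually_elim (use Wle in auto)
  from tendsto_le[OF trivial_limit_at_left_real W_lim tendsto_const this] show ?thesis .
qed

lemma ph_z_neg: "ph z < 0"
proof (rule ccontr)
  assume "\<not> ph z < 0"
  then have phz: "ph z \<ge> 0" by simp
  define t where "t = (z + 1) / 2"
  have t: "z < t" "t < 1" using zhi by (auto simp: t_def)
  have pht: "ph x > 0" if "z < x" "x < 1" for x using ph_mono[of z x] that zlo phz by auto
  have "W z < W t"
  proof (rule DERIV_pos_imp_increasing_open[OF t(1)])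
    fix x assume x: "z < x" "x < t"
    show "\<exists>y. (W has_real_derivative y) (at x) \<and> y > 0"
      using W_deriv[of x] Wd_sign_pos[of x] pht[of x] x t zlo by auto
  next
    show "continuous_on {z..t} W"
      using t zlo by (intro continuous_at_imp_continuous_on ballI W_cont) auto
  qed
  moreover have "W t \<le> 0" using W_le_lim[OF t pht[OF t]] .
  ultimately show False using W_z by simp
qed

lemma W_nonpos: assumes s: "z < s" "s < 1" shows "W s \<le> 0"
proof (cases "ph s > 0")
  case True then show ?thesis using W_le_lim[OF s] by simp
next
  case False
  have "W s \<le> W z"
  proof (rule DERIV_nonpos_imp_nonincreasing[of z s])
    show "z \<le> s" using s by simp
    fix x assume x: "z \<le> x" "x \<le> s"
    have "ph x \<le> 0" using False ph_mono[of x s] x s zlo by (cases "x = s") auto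
    then show "\<exists>y. (W has_real_derivative y) (at x) \<and> y \<le> 0"
      using W_deriv[of x] Wd_sign_nonpos[of x] x s zlo by auto
  qed
  then show ?thesis using W_z by simp
qed

end


context leg begin

lemma g_ge_h: assumes s: "z < s" "s < 1" shows "hfun p c s \<le> a * L s"
proof -
  define r where "r t = hfun p c t / L t" for t
  have rdec: "r s \<le> r t" if t: "z < t" "t \<le> s" for t
  proof (rule DERIV_nonpos_imp_nonincreasing[OF t(2)])
    fix x assume x: "t \<le> x" "x \<le> s"
    have x1: "-1 < x" "x < 1" "z < x" using x t s zlo by auto
    have Lx: "L x > 0" using L_pos x1 by auto
    have D: "(r has_real_derivative (hd x * L x - hfun p c x * deriv L x) / (L x * L x)) (at x)"
      unfolding r_def[abs_def] using Lx
      by (auto intro!: derivative_eq_intros h_deriv dL x1)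
    have pos: "1 - x^2 > 0" using sq_pos x1 by auto
    have "hd x * L x - hfun p c x * deriv L x = W x / (1 - x^2)"
      using pos by (simp add: W_def Q_def field_simps)
    also have "\<dots> \<le> 0" using W_nonpos[OF x1(3,2)] pos by (simp add: divide_nonpos_pos)
    finally have "(hd x * L x - hfun p c x * deriv L x) / (L x * L x) \<le> 0"
      using Lx by (simp add: divide_nonpos_pos)
    with D show "\<exists>y. (r has_real_derivative y) (at x) \<and> y \<le> 0" by blast
  qed
  have lh: "((\<lambda>y. (hfun p c y - hfun p c z) / (y - z)) \<longlongrightarrow> hd z) (at_right z)"
    using has_field_derivative_at_within[OF h_deriv[OF zlo zhi], of "{z<..}"]
    by (simp add: has_field_derivative_iff)
  have lL: "((\<lambda>y. (L y - L z) / (y - z)) \<longlongrightarrow> deriv L z) (at_right z)"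
    using has_field_derivative_at_within[OF dL[OF zlo zhi], of "{z<..}"]
    by (simp add: has_field_derivative_iff)
  have Lpz: "deriv L z \<noteq> 0" using Lp_pos[of z] zhi by simp
  have "((\<lambda>y. ((hfun p c y - hfun p c z) / (y - z)) / ((L y - L z) / (y - z))) \<longlongrightarrow> a) (at_right z)"
    using tendsto_divide[OF lh lL Lpz] by (simp add: a_eq)
  then have lr: "(r \<longlongrightarrow> a) (at_right z)"
  proof (rule Lim_transform_eventually)
    show "eventually (\<lambda>y. ((hfun p c y - hfun p c z) / (y - z)) / ((L y - L z) / (y - z)) = r y) (at_right z)"
      using eventually_at_right_real[OF zhi]
      by eventually_elim (auto simp: r_def hz Lz)
  qed
  have "eventually (\<lambda>y. r s \<le> r y) (at_right z)"
    using eventually_at_right_real[OF s(1)] by eventually_elim (use rdec in auto)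
  from tendsto_le[OF trivial_limit_at_right_real lr tendsto_const this]
  have "r s \<le> a" .
  then show ?thesis using L_pos[OF s] by (simp add: r_def divide_le_eq)
qed

lemma a_ge_1: "a \<ge> 1"
proof -
  have "((\<lambda>s. a * L s) \<longlongrightarrow> a * 1) (at_left 1)" by (intro tendsto_intros lim1)
  moreover have "eventually (\<lambda>s. hfun p c s \<le> a * L s) (at_left 1)"
    using eventually_at_left_real[OF zhi] by eventually_elim (use g_ge_h in auto)
  ultimately show ?thesis using tendsto_le[OF trivial_limit_at_left_real _ h_lim1] by simp
qed

definition Rf where "Rf t = p * (1 - t^2) * L t - 2 * t * Q t"

lemma R_deriv: "-1 < t \<Longrightarrow> t < 1 \<Longrightarrow> (Rf has_real_derivative (p - 2) * Q t) (at t)"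
proof -
  assume t: "-1 < t" "t < 1"
  have "(Rf has_real_derivative p * (- (2 * t)) * L t + p * (1 - t^2) * deriv L t - (2 * Q t + 2 * t * (- p * L t))) (at t)"
    unfolding Rf_def[abs_def] using t
    by (auto intro!: derivative_eq_intros dL Q_deriv simp: algebra_simps)
  moreover have "p * (- (2 * t)) * L t + p * (1 - t^2) * deriv L t - (2 * Q t + 2 * t * (- p * L t)) = (p - 2) * Q t"
    by (simp add: Q_def algebra_simps)
  ultimately show ?thesis by simp
qed

lemma K_L: assumes s: "z < s" "s < 1" shows "p * L s - 2 * s * deriv L s \<le> 0"
proof -
  have Rle: "Rf s \<le> Rf t" if t: "s \<le> t" "t < 1" for t
  proof (rule DERIV_nonneg_imp_nondecreasing[OF t(1)])
    fix x assume x: "s \<le> x" "x \<le> t"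
    then show "\<exists>y. (Rf has_real_derivative y) (at x) \<and> 0 \<le> y"
      using R_deriv[of x] Q_pos[of x] x s t zlo p_gt
      by (intro exI[of _ "(p - 2) * Q x"]) auto
  qed
  have "(Rf \<longlongrightarrow> p * (1 - 1^2) * 1 - 2 * 1 * 0) (at_left 1)"
    unfolding Rf_def[abs_def]
    by (intro tendsto_intros lim1 Q_lim) 
  then have Rlim: "(Rf \<longlongrightarrow> 0) (at_left 1)" by simp
  have "eventually (\<lambda>t. Rf s \<le> Rf t) (at_left 1)"
    using eventually_at_left_real[OF s(2)] by eventually_elim (use Rle in auto)
  from tendsto_le[OF trivial_limit_at_left_real Rlim tendsto_const this]
  have "Rf s \<le> 0" .
  moreover have "Rf s = (1 - s^2) * (p * L s - 2 * s * deriv L s)"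
    by (simp add: Rf_def Q_def algebra_simps)
  moreover have "1 - s^2 > 0" using sq_pos s zlo by auto
  ultimately show ?thesis by (simp add: mult_le_0_iff)
qed

end



lemma DERIV_local:
  fixes f gL :: "real \<Rightarrow> real"
  assumes "(f has_real_derivative D) (at x)" "open S" "x \<in> S" "\<And>y. y \<in> S \<Longrightarrow> f y = gL y"
  shows "(gL has_real_derivative D) (at x)"
proof -
  have "eventually (\<lambda>y. f y = gL y) (nhds x)"
    using eventually_nhds_in_open[OF assms(2,3)] by eventually_elim (use assms(4) in auto)
  with assms(1) show ?thesis using DERIV_cong_ev[of x x f gL D D] by simp
qed

lemma isCont_local:
  fixes f gL :: "real \<Rightarrow> real"
  assumes "isCont f x" "open S" "x \<in> S" "\<And>y. y \<in> S \<Longrightarrow> f y = gL y"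
  shows "isCont gL x"
proof -
  have "eventually (\<lambda>y. f y = gL y) (nhds x)"
    using eventually_nhds_in_open[OF assms(2,3)] by eventually_elim (use assms(4) in auto)
  with assms(1) show ?thesis using isCont_cong by blast
qed

context leg begin

definition gL where "gL s = (if z \<le> s then a * L s else hfun p c s)"
definition gd where "gd s = (if z \<le> s then a * (if s = 1 then p / 2 else deriv L s) else hd s)"

lemma hd_z: "hd z = a * deriv L z"
  using Lp_pos[of z] zhi by (simp add: a_eq)

lemma hd_limm1: "(hd \<longlongrightarrow> hd (-1)) (at_right (-1))"
  unfolding hd_def using p_gt
  by (intro tendsto_intros tendsto_powr') (auto intro!: tendsto_intros tendsto_ident_at eventually_at_rightI[of "-1" 0])

lemma h_limm1: "(hfun p c \<longlongrightarrow> hfun p c (-1)) (at_right (-1))"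
  unfolding hfun_eq using p_gt
  by (intro tendsto_intros tendsto_powr') (auto intro!: tendsto_intros tendsto_ident_at eventually_at_rightI[of "-1" 0])

lemma h_deriv_m1: "(hfun p c has_real_derivative hd (-1)) (at (-1) within {-1..1})"
proof -
  have ev: "eventually (\<lambda>x. x \<in> {-1<..<1}) (at_right (-1::real))"
    by (rule eventually_at_right_real) simp
  have "((\<lambda>x. (hfun p c x - hfun p c (-1)) / (x + 1)) \<longlongrightarrow> hd (-1)) (at_right (-1))"
  proof (rule lhopital_right[where f' = "hd" and g' = "\<lambda>x. 1"])
    show "((\<lambda>x. hfun p c x - hfun p c (-1)) \<longlongrightarrow> 0) (at_right (-1))"
      using tendsto_diff[OF h_limm1 tendsto_const[of "hfun p c (-1)"]] by simp
    show "((\<lambda>x. x + 1) \<longlongrightarrow> 0) (at_right (-1::real))"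
      by (auto intro!: tendsto_eq_intros tendsto_ident_at)
    show "eventually (\<lambda>x. x + 1 \<noteq> 0) (at_right (-1::real))"
      using ev by eventually_elim auto
    show "eventually (\<lambda>x. 1 \<noteq> (0::real)) (at_right (-1::real))" by simp
    show "eventually (\<lambda>x. ((\<lambda>x. hfun p c x - hfun p c (-1)) has_real_derivative hd x) (at x)) (at_right (-1))"
      using ev by eventually_elim (auto intro!: derivative_eq_intros h_deriv)
    show "eventually (\<lambda>x. ((\<lambda>x. x + 1) has_real_derivative 1) (at x)) (at_right (-1::real))"
      by (intro always_eventually allI) (auto intro!: derivative_eq_intros)
    show "filterlim (\<lambda>x. hd x / 1) (nhds (hd (-1))) (at_right (-1))"
      using hd_limm1 by simp
  qed
  then show ?thesis
    by (simp add: has_field_derivative_iff at_within_Icc_at_right)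
qed

lemma g_deriv_z: "(gL has_real_derivative a * deriv L z) (at z)"
proof -
  have lh: "((\<lambda>y. (hfun p c y - hfun p c z) / (y - z)) \<longlongrightarrow> hd z) (at_left z)"
    using has_field_derivative_at_within[OF h_deriv[OF zlo zhi], of "{..<z}"]
    by (simp add: has_field_derivative_iff)
  have lL: "((\<lambda>y. (L y - L z) / (y - z)) \<longlongrightarrow> deriv L z) (at_right z)"
    using has_field_derivative_at_within[OF dL[OF zlo zhi], of "{z<..}"]
    by (simp add: has_field_derivative_iff)
  have gz: "gL z = 0" by (simp add: gL_def Lz)
  have "((\<lambda>y. (gL y - gL z) / (y - z)) \<longlongrightarrow> a * deriv L z) (at_left z)"
    using lh unfolding hd_z
  proof (rule Lim_transform_eventually)
    show "eventually (\<lambda>y. (hfun p c y - hfun p c z) / (y - z) = (gL y - gL z) / (y - z)) (at_left z)"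
      using eventually_at_left_real[OF zlo] by eventually_elim (auto simp: gL_def hz Lz)
  qed
  moreover have "((\<lambda>y. (gL y - gL z) / (y - z)) \<longlongrightarrow> a * deriv L z) (at_right z)"
    using tendsto_mult[OF tendsto_const[of a] lL]
  proof (rule Lim_transform_eventually)
    show "eventually (\<lambda>y. a * ((L y - L z) / (y - z)) = (gL y - gL z) / (y - z)) (at_right z)"
      using eventually_at_right_real[OF zhi] by eventually_elim (auto simp: gL_def Lz)
  qed
  ultimately show ?thesis
    by (simp add: has_field_derivative_iff filterlim_at_split)
qed

lemma g_C1: "\<forall>s\<in>{-1..1}. (gL has_real_derivative gd s) (at s within {-1..1})"
proof
  fix s :: real assume s: "s \<in> {-1..1}"
  consider "s = -1" | "-1 < s" "s < z" | "s = z" | "z < s" "s < 1" | "s = 1"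
    using s zlo zhi by force
  then show "(gL has_real_derivative gd s) (at s within {-1..1})"
  proof cases
    case 1
    show ?thesis unfolding 1
    proof (rule has_field_derivative_transform_within[OF _ _ _ ])
      show "(hfun p c has_real_derivative gd (-1)) (at (-1) within {-1..1})"
        using h_deriv_m1 zlo by (simp add: gd_def)
      show "0 < z + 1" using zlo by simp
      show "-1 \<in> {-1..1::real}" by simp
      fix x :: real assume "x \<in> {-1..1}" "dist x (-1) < z + 1"
      then show "hfun p c x = gL x" by (auto simp: gL_def dist_real_def)
    qed
  next
    case 2
    have "(gL has_real_derivative hd s) (at s)"
      by (rule DERIV_local[OF h_deriv[of s], of "{..<z}"]) (use 2 zhi in \<open>auto simp: gL_def\<close>)
    then show ?thesis using 2 by (auto simp: gd_def intro: has_field_derivative_at_within)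
  next
    case 3
    then show ?thesis using g_deriv_z zhi by (auto simp: gd_def intro: has_field_derivative_at_within)
  next
    case 4
    have "((\<lambda>x. a * L x) has_real_derivative a * deriv L s) (at s)"
      using 4 zlo by (auto intro!: derivative_eq_intros dL)
    then have "(gL has_real_derivative a * deriv L s) (at s)"
      by (rule DERIV_local[of _ _ _ "{z<..}"]) (use 4 in \<open>auto simp: gL_def\<close>)
    then show ?thesis using 4 by (auto simp: gd_def intro: has_field_derivative_at_within)
  next
    case 5
    show ?thesis unfolding 5
    proof (rule has_field_derivative_transform_within)
      show "((\<lambda>x. a * L x) has_real_derivative gd 1) (at 1 within {-1..1})"
        using DERIV_cmult[OF L_deriv_1, of a] zhi by (simp add: gd_def)
      show "0 < 1 - z" using zhi by simp
      show "1 \<in> {-1..1::real}" by simp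
      fix x :: real assume "x \<in> {-1..1}" "dist x 1 < 1 - z"
      then show "a * L x = gL x" by (auto simp: gL_def dist_real_def)
    qed
  qed
qed

end


context leg begin

lemma Lp_cont: "-1 < s \<Longrightarrow> s < 1 \<Longrightarrow> isCont (deriv L) s"
  using ddL DERIV_isCont by blast

lemma hd_cont: "-1 < s \<Longrightarrow> s < 1 \<Longrightarrow> isCont hd s"
  using hd_deriv DERIV_isCont by blast

lemma gd_cont: "continuous_on {-1..1} gd"
  unfolding continuous_on_eq_continuous_within
proof
  fix s :: real assume s: "s \<in> {-1..1}"
  consider "s = -1" | "-1 < s" "s < z" | "s = z" | "z < s" "s < 1" | "s = 1"
    using s zlo zhi by force
  then show "continuous (at s within {-1..1}) gd"
  proof cases
    case 1
    have "(hd \<longlongrightarrow> gd (-1)) (at_right (-1))" using hd_limm1 zlo by (simp add: gd_def)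
    then have "(gd \<longlongrightarrow> gd (-1)) (at_right (-1))"
    proof (rule Lim_transform_eventually)
      show "eventually (\<lambda>x. hd x = gd x) (at_right (-1))"
        using eventually_at_right_real[OF zlo] by eventually_elim (auto simp: gd_def)
    qed
    then show ?thesis unfolding 1 continuous_within by (simp add: at_within_Icc_at_right)
  next
    case 2
    have "isCont gd s"
      by (rule isCont_local[OF hd_cont[of s], of "{..<z}"]) (use 2 zhi in \<open>auto simp: gd_def\<close>)
    then show ?thesis by (rule continuous_at_imp_continuous_at_within)
  next
    case 3
    have gdz: "gd z = a * deriv L z" using zhi by (simp add: gd_def)
    have "(gd \<longlongrightarrow> gd z) (at_left z)"
    proof (rule Lim_transform_eventually)
      show "(hd \<longlongrightarrow> gd z) (at_left z)"
        using hd_cont[OF zlo zhi] by (simp add: gdz hd_z[symmetric] isCont_def filterlim_at_split)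
      show "eventually (\<lambda>x. hd x = gd x) (at_left z)"
        using eventually_at_left_real[OF zlo] by eventually_elim (auto simp: gd_def)
    qed
    moreover have "(gd \<longlongrightarrow> gd z) (at_right z)"
    proof (rule Lim_transform_eventually)
      show "((\<lambda>x. a * deriv L x) \<longlongrightarrow> gd z) (at_right z)"
        using isCont_tendsto_compose[OF Lp_cont[OF zlo zhi] tendsto_ident_at, of "{z<..}"]
        by (auto simp: gdz intro!: tendsto_intros)
      show "eventually (\<lambda>x. a * deriv L x = gd x) (at_right z)"
        using eventually_at_right_real[OF zhi] by eventually_elim (auto simp: gd_def)
    qed
    ultimately have "isCont gd z"
      by (simp add: isCont_def filterlim_at_split)
    then show ?thesis unfolding 3 by (rule continuous_at_imp_continuous_at_within)
  next
    case 4
    have "isCont (\<lambda>x. a * deriv L x) s" using 4 zlo by (auto intro!: continuous_intros Lp_cont)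
    then have "isCont gd s"
      by (rule isCont_local[of _ _ "{z<..<1}"]) (use 4 in \<open>auto simp: gd_def\<close>)
    then show ?thesis by (rule continuous_at_imp_continuous_at_within)
  next
    case 5
    have "(gd \<longlongrightarrow> gd 1) (at_left 1)"
    proof (rule Lim_transform_eventually)
      show "((\<lambda>x. a * deriv L x) \<longlongrightarrow> gd 1) (at_left 1)"
        using tendsto_mult[OF tendsto_const[of a] Lp_lim] zhi by (simp add: gd_def)
      show "eventually (\<lambda>x. a * deriv L x = gd x) (at_left 1)"
        using eventually_at_left_real[OF zhi] by eventually_elim (auto simp: gd_def)
    qed
    then show ?thesis unfolding 5 continuous_within by (simp add: at_within_Icc_at_left)
  qed
qed

lemma g_ge: "\<forall>s\<in>{-1..1}. gL s \<ge> hfun p c s"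
proof
  fix s :: real assume s: "s \<in> {-1..1}"
  consider "s < z" | "s = z" | "z < s" "s < 1" | "s = 1" using s by force
  then show "gL s \<ge> hfun p c s"
  proof cases
    case 1 then show ?thesis by (simp add: gL_def)
  next
    case 2 then show ?thesis by (simp add: gL_def Lz hz)
  next
    case 3 then show ?thesis using g_ge_h[OF 3] by (simp add: gL_def)
  next
    case 4 then show ?thesis using a_ge_1 zhi by (simp add: gL_def L1 hfun_def)
  qed
qed

lemma deriv_g_left: "-1 < s \<Longrightarrow> s < z \<Longrightarrow> deriv gL s = hd s"
  by (rule DERIV_imp_deriv, rule DERIV_local[OF h_deriv[of s], of "{..<z}"]) (use zhi in \<open>auto simp: gL_def\<close>)

lemma deriv_g_right: "z < s \<Longrightarrow> s < 1 \<Longrightarrow> deriv gL s = a * deriv L s"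
proof -
  assume s: "z < s" "s < 1"
  have "((\<lambda>x. a * L x) has_real_derivative a * deriv L s) (at s)"
    using s zlo by (auto intro!: derivative_eq_intros dL)
  then have "(gL has_real_derivative a * deriv L s) (at s)"
    by (rule DERIV_local[of _ _ _ "{z<..}"]) (use s in \<open>auto simp: gL_def\<close>)
  then show ?thesis by (rule DERIV_imp_deriv)
qed

lemma deriv2_g_left: assumes s: "-1 < s" "s < z" shows "deriv (deriv gL) s = hdd s"
proof -
  have "(deriv gL has_real_derivative hdd s) (at s)"
    by (rule DERIV_local[OF hd_deriv[of s], of "{-1<..<z}"]) (use s zhi deriv_g_left in auto)
  then show ?thesis by (rule DERIV_imp_deriv)
qed

lemma deriv2_g_right: assumes s: "z < s" "s < 1" shows "deriv (deriv gL) s = a * deriv (deriv L) s"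
proof -
  have "((\<lambda>x. a * deriv L x) has_real_derivative a * deriv (deriv L) s) (at s)"
    using s zlo by (auto intro!: derivative_eq_intros ddL)
  then have "(deriv gL has_real_derivative a * deriv (deriv L) s) (at s)"
    by (rule DERIV_local[of _ _ _ "{z<..<1}"]) (use s deriv_g_right in auto)
  then show ?thesis by (rule DERIV_imp_deriv)
qed

lemma DK_left: assumes s: "-1 < s" "s < z"
  shows "Dop p gL s < 0" "Kop p gL s = 0"
proof -
  have gs: "gL s = hfun p c s" using s by (simp add: gL_def)
  have zs: "s < 1" using s zhi by simp
  have eq: "Dop p gL s = p^2 * ((1+s)/2) * ((1-s)/2) * ph s"
    unfolding Dop_def gs deriv_g_left[OF s] deriv2_g_left[OF s] using Dh[OF s(1) zs] .
  have neg: "ph s < 0" using ph_mono[OF s(1,2) zhi] ph_z_neg by simp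
  have pos: "p^2 * ((1+s)/2) * ((1-s)/2) > 0" using s zs p_gt by auto
  show "Dop p gL s < 0" unfolding eq by (rule mult_pos_neg[OF pos neg])
  show "Kop p gL s = 0"
    unfolding Kop_def gs deriv_g_left[OF s] deriv2_g_left[OF s] using Kh[OF s(1) zs] .
qed

lemma DK_right: assumes s: "z < s" "s < 1"
  shows "Dop p gL s = 0" "Kop p gL s \<le> 0"
proof -
  have gs: "gL s = a * L s" using s by (simp add: gL_def)
  have s1: "-1 < s" using s zlo by simp
  have e: "(1 - s^2) * deriv (deriv L) s = 2 * s * deriv L s - p * L s"
    using ode[OF s1 s(2)] by linarith
  have "Dop p gL s = a * ((1 - s^2) * deriv (deriv L) s - 2 * s * deriv L s + p * L s)"
    unfolding Dop_def gs deriv_g_right[OF s] deriv2_g_right[OF s] by (simp add: algebra_simps)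
  then show "Dop p gL s = 0" using ode[OF s1 s(2)] by simp
  have "Kop p gL s = a * (p * (p - 1) * L s - 2 * (p - 1) * s * deriv L s - (1 - s^2) * deriv (deriv L) s)"
    unfolding Kop_def gs deriv_g_right[OF s] deriv2_g_right[OF s] by (simp add: algebra_simps)
  also have "\<dots> = a * p * (p * L s - 2 * s * deriv L s)"
    unfolding e by (simp add: algebra_simps)
  also have "\<dots> \<le> 0" using K_L[OF s] a_pos p_gt by (simp add: mult_nonneg_nonpos)
  finally show "Kop p gL s \<le> 0" .
qed

end

theorem mainTheorem10:
  fixes \<alpha> p z c a :: real and L g :: "real \<Rightarrow> real" and \<phi> :: "real \<Rightarrow> real \<Rightarrow> real"
  assumes p_def: "p = \<alpha> * (\<alpha> + 1)" and p_gt: "p > 2"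
    and L: "is_Legendre_L \<alpha> L"
    and z: "is_largest_zero L z"
    and c_def: "c = (1 + z) / (1 - z)"
    and a_def: "a = deriv (hfun p c) z / deriv L z"
    and g_def: "g = (\<lambda>s. if z \<le> s then a * L s else hfun p c s)"
    and phi_def: "\<phi> = (\<lambda>x y. (x + y) powr p * g ((y - x) / (x + y)))"
  shows
    "(\<exists>g'. (\<forall>s\<in>{-1..1}. (g has_real_derivative g' s) (at s within {-1..1}))
           \<and> continuous_on {-1..1} g')
     \<and> (\<forall>s\<in>{-1..1}. g s \<ge> hfun p c s)
     \<and> (\<forall>s\<in>{-1<..<1}. s \<noteq> z \<longrightarrow>
          Dop p g s \<le> 0 \<and> Dop p g s / (1 - s^2) + Kop p g s \<le> 0)
     \<and> (\<forall>x y. x \<ge> 0 \<and> y \<ge> 0 \<and> (x, y) \<noteq> (0, 0) \<longrightarrow>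
          \<phi> x y \<ge> y powr p - c powr p * x powr p)
     \<and> (\<forall>x y. \<forall>h k :: real^2. x > 0 \<and> y > 0 \<and> (y - x) / (x + y) \<noteq> z \<and> norm k \<le> norm h \<longrightarrow>
          (let \<phi>x = (\<lambda>x' y'. deriv (\<lambda>t. \<phi> t y') x');
               \<phi>y = (\<lambda>x' y'. deriv (\<lambda>t. \<phi> x' t) y');
               \<phi>xx = deriv (\<lambda>t. \<phi>x t y) x;
               \<phi>yy = deriv (\<lambda>t. \<phi>y x t) y;
               \<phi>xy = deriv (\<lambda>t. \<phi>x x t) y
           in (\<phi>x x y / x + \<phi>xx) * (norm h)^2 + 2 * \<phi>xy * (h \<bullet> k)
              + (\<phi>yy + \<phi>y x y / y) * (norm k)^2 \<le> 0))"
proof -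
  have Ld: "\<forall>s\<in>{-1<..<1}. L differentiable (at s) \<and> deriv L differentiable (at s) \<and>
        (1 - s^2) * deriv (deriv L) s - 2 * s * deriv L s + \<alpha> * (\<alpha> + 1) * L s = 0"
    and Llim: "(L \<longlongrightarrow> 1) (at_left 1)" and L1: "L 1 = 1"
    using L unfolding is_Legendre_L_def by auto
  have zz: "z \<in> {-1<..<1}" "L z = 0" "\<forall>s\<in>{-1<..<1}. L s = 0 \<longrightarrow> s \<le> z"
    using z unfolding is_largest_zero_def by auto
  interpret leg p z c a L
  proof
    show "p > 2" by (rule p_gt)
    fix s :: real assume s: "-1 < s" "s < 1"
    show "(L has_real_derivative deriv L s) (at s)"
      using Ld s by (auto simp: DERIV_deriv_iff_real_differentiable)
    show "(deriv L has_real_derivative deriv (deriv L) s) (at s)"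
      using Ld s by (auto simp: DERIV_deriv_iff_real_differentiable)
    show "(1 - s^2) * deriv (deriv L) s - 2 * s * deriv L s + p * L s = 0"
      using Ld s by (auto simp: p_def)
  next
    fix s :: real assume s: "-1 < s" "s < 1" "L s = 0"
    then show "s \<le> z" using zz by auto
  qed (use Llim L1 zz c_def a_def in auto)
  have gg: "g = gL" by (rule ext) (simp add: g_def gL_def)
  have P1: "\<exists>g'. (\<forall>s\<in>{-1..1}. (g has_real_derivative g' s) (at s within {-1..1})) \<and> continuous_on {-1..1} g'"
    using g_C1 gd_cont unfolding gg by blast
  have P2: "\<forall>s\<in>{-1..1}. g s \<ge> hfun p c s" using g_ge unfolding gg .
  have P3: "\<forall>s\<in>{-1<..<1}. s \<noteq> z \<longrightarrow> Dop p g s \<le> 0 \<and> Dop p g s / (1 - s^2) + Kop p g s \<le> 0"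
  proof (intro ballI impI)
    fix s :: real assume s: "s \<in> {-1<..<1}" "s \<noteq> z"
    have pos: "1 - s^2 > 0" using s sq_pos by auto
    show "Dop p g s \<le> 0 \<and> Dop p g s / (1 - s^2) + Kop p g s \<le> 0"
    proof (cases "s < z")
      case True
      then have "Dop p gL s < 0" "Kop p gL s = 0" using DK_left[of s] s by auto
      then show ?thesis unfolding gg using pos by (simp add: divide_neg_pos less_imp_le)
    next
      case False
      then have "z < s" using s by simp
      then have "Dop p gL s = 0" "Kop p gL s \<le> 0" using DK_right[of s] s by auto
      then show ?thesis unfolding gg by simp
    qed
  qed
  have P4: "\<forall>x y. x \<ge> 0 \<and> y \<ge> 0 \<and> (x, y) \<noteq> (0, 0) \<longrightarrow> \<phi> x y \<ge> y powr p - c powr p * x powr p"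
  proof (intro allI impI)
    fix x y :: real assume xy: "x \<ge> 0 \<and> y \<ge> 0 \<and> (x, y) \<noteq> (0, 0)"
    define U where "U = x + y"
    have U: "U > 0" using xy by (auto simp: U_def)
    define s where "s = (y - x) / (x + y)"
    have U': "x + y > 0" using U by (simp add: U_def)
    have s: "s \<in> {-1..1}" using xy U' unfolding s_def by (auto simp: divide_le_eq le_divide_eq)
    have e1: "(1 + s) / 2 = y / U" and e2: "(1 - s) / 2 = x / U"
      using U' by (auto simp: s_def U_def field_simps)
    have Up: "U powr p > 0" using U by simp
    have "U powr p * hfun p c s = y powr p - c powr p * x powr p"
      unfolding hfun_def e1 e2 using xy U Up by (simp add: powr_divide field_simps)
    moreover have "U powr p * hfun p c s \<le> U powr p * g s"
      using P2 s Up by (intro mult_left_mono) auto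
    moreover have "\<phi> x y = U powr p * g s" by (simp add: phi_def U_def s_def)
    ultimately show "\<phi> x y \<ge> y powr p - c powr p * x powr p" by simp
  qed
  have P5: "\<forall>x y. \<forall>h k :: real^2. x > 0 \<and> y > 0 \<and> (y - x) / (x + y) \<noteq> z \<and> norm k \<le> norm h \<longrightarrow>
          (let \<phi>x = (\<lambda>x' y'. deriv (\<lambda>t. \<phi> t y') x');
               \<phi>y = (\<lambda>x' y'. deriv (\<lambda>t. \<phi> x' t) y');
               \<phi>xx = deriv (\<lambda>t. \<phi>x t y) x;
               \<phi>yy = deriv (\<lambda>t. \<phi>y x t) y;
               \<phi>xy = deriv (\<lambda>t. \<phi>x x t) y
           in (\<phi>x x y / x + \<phi>xx) * (norm h)^2 + 2 * \<phi>xy * (h \<bullet> k)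
              + (\<phi>yy + \<phi>y x y / y) * (norm k)^2 \<le> 0)"
  proof (intro allI impI)
    fix x y :: real and h k :: "real^2"
    assume H: "x > 0 \<and> y > 0 \<and> (y - x) / (x + y) \<noteq> z \<and> norm k \<le> norm h"
    define s where "s = (y - x) / (x + y)"
    have s11: "-1 < s" "s < 1" using H by (auto simp: s_def field_simps)
    have p0: "p > 0" using p_gt by simp
    show "let \<phi>x = (\<lambda>x' y'. deriv (\<lambda>t. \<phi> t y') x');
               \<phi>y = (\<lambda>x' y'. deriv (\<lambda>t. \<phi> x' t) y');
               \<phi>xx = deriv (\<lambda>t. \<phi>x t y) x;
               \<phi>yy = deriv (\<lambda>t. \<phi>y x t) y;
               \<phi>xy = deriv (\<lambda>t. \<phi>x x t) y
           in (\<phi>x x y / x + \<phi>xx) * (norm h)^2 + 2 * \<phi>xy * (h \<bullet> k)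
              + (\<phi>yy + \<phi>y x y / y) * (norm k)^2 \<le> 0"
    proof (cases "s < z")
      case True
      show ?thesis
      proof (rule phi_qf[where I = "{-1<..<z}" and Ga = "hfun p c" and Gb = hd and Gc = hdd])
        show "open {-1<..<z}" by simp
        show "{-1<..<z} \<subseteq> {-1<..<1::real}" using zhi by auto
        show "p > 0" by (rule p0)
        show "x > 0" "y > 0" "norm k \<le> norm h" using H by auto
        show "(y - x) / (x + y) \<in> {-1<..<z}" using True s11 by (simp add: s_def)
        fix x' y' :: real assume "x' > 0" "y' > 0" "(y' - x') / (x' + y') \<in> {-1<..<z}"
        then show "\<phi> x' y' = (x' + y') powr p * hfun p c ((y' - x') / (x' + y'))"
          by (simp add: phi_def gg gL_def)
      next
        fix s :: real assume s: "s \<in> {-1<..<z}"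
        then have s': "-1 < s" "s < 1" "s < z" using zhi by auto
        show "(hfun p c has_real_derivative hd s) (at s)" using h_deriv s' by auto
        show "(hd has_real_derivative hdd s) (at s)" using hd_deriv s' by auto
        show "hd s \<ge> 0" using hd_pos s' by (simp add: less_imp_le)
        have n1: "ph s < 0" using ph_mono[of s z] s' zhi ph_z_neg by auto
        have n2: "p^2 * ((1+s)/2) * ((1-s)/2) > 0" using s' p_gt by auto
        have "p^2 * ((1+s)/2) * ((1-s)/2) * ph s < 0" by (rule mult_pos_neg[OF n2 n1])
        then show "(1 - s^2) * hdd s - 2 * s * hd s + p * hfun p c s \<le> 0"
          using Dh[OF s'(1,2)] by simp
        show "p * (p - 1) * hfun p c s - 2 * (p - 1) * s * hd s - (1 - s^2) * hdd s \<le> 0"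
          using Kh[OF s'(1,2)] by simp
      qed
    next
      case False
      then have zs: "z < s" using H by (auto simp: s_def)
      show ?thesis
      proof (rule phi_qf[where I = "{z<..<1}" and Ga = "\<lambda>s. a * L s" and Gb = "\<lambda>s. a * deriv L s"
            and Gc = "\<lambda>s. a * deriv (deriv L) s"])
        show "open {z<..<1::real}" by simp
        show "{z<..<1} \<subseteq> {-1<..<1::real}" using zlo by auto
        show "p > 0" by (rule p0)
        show "x > 0" "y > 0" "norm k \<le> norm h" using H by auto
        show "(y - x) / (x + y) \<in> {z<..<1}" using zs s11 by (simp add: s_def)
        fix x' y' :: real assume "x' > 0" "y' > 0" "(y' - x') / (x' + y') \<in> {z<..<1}"
        then show "\<phi> x' y' = (x' + y') powr p * (a * L ((y' - x') / (x' + y')))"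
          by (simp add: phi_def gg gL_def)
      next
        fix s :: real assume s: "s \<in> {z<..<1}"
        then have s': "-1 < s" "s < 1" "z < s" using zlo by auto
        show "((\<lambda>s. a * L s) has_real_derivative a * deriv L s) (at s)"
          using s' by (auto intro!: derivative_eq_intros dL)
        show "((\<lambda>s. a * deriv L s) has_real_derivative a * deriv (deriv L) s) (at s)"
          using s' by (auto intro!: derivative_eq_intros ddL)
        show "a * deriv L s \<ge> 0" using a_pos Lp_pos[of s] s' by simp
        have e: "(1 - s^2) * deriv (deriv L) s = 2 * s * deriv L s - p * L s"
          using ode[OF s'(1,2)] by linarith
        have "(1 - s^2) * (a * deriv (deriv L) s) - 2 * s * (a * deriv L s) + p * (a * L s)
            = a * ((1 - s^2) * deriv (deriv L) s - 2 * s * deriv L s + p * L s)" by (simp add: algebra_simps)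
        then show "(1 - s^2) * (a * deriv (deriv L) s) - 2 * s * (a * deriv L s) + p * (a * L s) \<le> 0"
          using ode[OF s'(1,2)] by simp
        have "p * (p - 1) * (a * L s) - 2 * (p - 1) * s * (a * deriv L s) - (1 - s^2) * (a * deriv (deriv L) s)
            = a * (p * (p - 1) * L s - 2 * (p - 1) * s * deriv L s - (1 - s^2) * deriv (deriv L) s)"
          by (simp add: algebra_simps)
        also have "\<dots> = a * p * (p * L s - 2 * s * deriv L s)" unfolding e by (simp add: algebra_simps)
        also have "\<dots> \<le> 0" using K_L[OF s'(3,2)] a_pos p_gt by (simp add: mult_nonneg_nonpos)
        finally show "p * (p - 1) * (a * L s) - 2 * (p - 1) * s * (a * deriv L s) - (1 - s^2) * (a * deriv (deriv L) s) \<le> 0" .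
      qed
    qed
  qed
  show ?thesis using P1 P2 P3 P4 P5 by blast
qed

end
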